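(* Let $\mathcal{S}$ be the regular $d$-dimensional $\delta$-grid, $1\le q<\infty$, and let $\Omega\subseteq[0,1]^d$ be a convex body containing a ball of radius at least $10d^{3/2}\delta$. Then for every $t>0$ and every $f\in B^q_{\mathcal{S}}(0;t;\Omega)$, $f(x)\ge-20dt$ for all $x\in\Omega$.
   Context: $\mathcal{S}=\{(k_1\delta,\dots,k_d\delta):k_i\in\mathbb{Z}\}$. $\ell_{\mathcal{S}}(f,\Omega,q)=\big(\frac{1}{\#(\Omega\cap\mathcal{S})}\sum_{s\in\Omega\cap\mathcal{S}}|f(s)|^q\big)^{1/q}$ and $B^q_{\mathcal{S}}(0;t;\Omega)=\{f:\Omega\to\mathbb{R}\ \text{convex}:\ \ell_{\mathcal{S}}(f,\Omega,q)\le t\}$. *)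

theory Defs
  imports "HOL-Analysis.Analysis"
begin

definition grid :: "real \<Rightarrow> (real^'n) set" where
  "grid \<delta> = {x. \<forall>i. \<exists>k::int. x $ i = real_of_int k * \<delta>}"

definition ell_S :: "real \<Rightarrow> (real^'n \<Rightarrow> real) \<Rightarrow> (real^'n) set \<Rightarrow> real \<Rightarrow> real" where
  "ell_S \<delta> f \<Omega> q =
     ((1 / real (card (\<Omega> \<inter> grid \<delta>))) * (\<Sum>s\<in>\<Omega> \<inter> grid \<delta>. \<bar>f s\<bar> powr q)) powr (1 / q)"

text \<open>B^q_S(0;t;Omega): convex functions on Omega with discrete q-norm at most t
  (functions are total, only values on Omega matter).\<close>
definition B_S :: "real \<Rightarrow> real \<Rightarrow> real \<Rightarrow> (real^'n) set \<Rightarrow> (real^'n \<Rightarrow> real) set" where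
  "B_S \<delta> q t \<Omega> = {f. convex_on \<Omega> f \<and> ell_S \<delta> f \<Omega> q \<le> t}"

end

theory Submission
  imports Defs
begin

definition hat :: "real \<Rightarrow> real" where "hat s = max 0 (1 - \<bar>s\<bar>)"

lemma hat_nonneg: "hat s \<ge> 0" by (simp add: hat_def)
lemma hat_le1: "hat s \<le> 1" by (simp add: hat_def)

lemma sum_atmost_one:
  fixes g :: "'a \<Rightarrow> real"
  assumes "finite P" "\<And>a b. a \<in> P \<Longrightarrow> b \<in> P \<Longrightarrow> a = b"
  shows "sum g P = 0 \<or> (\<exists>a\<in>P. sum g P = g a)"
proof (cases "P = {}")
  case False
  then obtain a where a: "a \<in> P" by blast
  then have "P = {a}" using assms(2) by blast
  then show ?thesis by auto
qed simp

lemma hat_sum_sep: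
  fixes A :: "real set"
  assumes fin: "finite A" and sep: "\<And>a b. a \<in> A \<Longrightarrow> b \<in> A \<Longrightarrow> a \<noteq> b \<Longrightarrow> \<bar>a - b\<bar> \<ge> 1"
  shows "(\<Sum>a\<in>A. hat a) \<le> 1"
proof -
  define P where "P = {a\<in>A. -1 < a \<and> a \<le> 0}"
  define Q where "Q = {a\<in>A. 0 < a \<and> a < 1}"
  define R where "R = {a\<in>A. \<not> (-1 < a \<and> a < 1)}"
  have AU: "A = P \<union> (Q \<union> R)" unfolding P_def Q_def R_def by auto
  have fP: "finite P" "finite Q" "finite R" using fin unfolding P_def Q_def R_def by auto
  have R0: "(\<Sum>a\<in>R. hat a) = 0" unfolding R_def hat_def by (intro sum.neutral) auto
  have "(\<Sum>a\<in>A. hat a) = (\<Sum>a\<in>P. hat a) + ((\<Sum>a\<in>Q. hat a) + (\<Sum>a\<in>R. hat a))"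
    unfolding AU using fP by (subst sum.union_disjoint; (auto simp: P_def Q_def R_def)?)+
  also have "\<dots> = (\<Sum>a\<in>P. hat a) + (\<Sum>a\<in>Q. hat a)" using R0 by simp
  finally have eq: "(\<Sum>a\<in>A. hat a) = (\<Sum>a\<in>P. hat a) + (\<Sum>a\<in>Q. hat a)" .
  have P1: "a = b" if "a \<in> P" "b \<in> P" for a b
    using sep[of a b] that unfolding P_def by force
  have Q1: "a = b" if "a \<in> Q" "b \<in> Q" for a b
    using sep[of a b] that unfolding Q_def by force
  have PQ: "hat p + hat q \<le> 1" if "p \<in> P" "q \<in> Q" for p q
  proof -
    have "p \<noteq> q" using that unfolding P_def Q_def by auto
    then have "\<bar>p - q\<bar> \<ge> 1" using sep[of p q] that unfolding P_def Q_def by auto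
    then show ?thesis using that unfolding P_def Q_def hat_def by auto
  qed
  from sum_atmost_one[OF fP(1) P1, of hat] sum_atmost_one[OF fP(2) Q1, of hat]
  show ?thesis unfolding eq using PQ hat_le1 by (smt (verit))
qed

lemma sum_prod_le1:
  fixes Y :: "(real^'n) set" and g :: "'n \<Rightarrow> real \<Rightarrow> real"
  assumes fin: "finite Y" and nn: "\<And>i s. g i s \<ge> 0"
    and le: "\<And>i. (\<Sum>s\<in>(\<lambda>y. y$i)`Y. g i s) \<le> 1"
  shows "(\<Sum>y\<in>Y. \<Prod>i\<in>UNIV. g i (y$i)) \<le> 1"
proof -
  define A where "A i = (\<lambda>y. y$i)`Y" for i
  have fA: "finite (A i)" for i using fin unfolding A_def by auto
  have inj: "inj_on (\<lambda>y. (\<lambda>i. y$i)) Y" by (auto simp: inj_on_def vec_eq_iff)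
  have "(\<Sum>y\<in>Y. \<Prod>i\<in>UNIV. g i (y$i)) = (\<Sum>F\<in>(\<lambda>y. (\<lambda>i. y$i))`Y. \<Prod>i\<in>UNIV. g i (F i))"
    by (subst sum.reindex[OF inj]) auto
  also have "\<dots> \<le> (\<Sum>F\<in>PiE UNIV A. \<Prod>i\<in>UNIV. g i (F i))"
    by (rule sum_mono2) (auto simp: A_def intro!: prod_nonneg nn finite_PiE fA)
  also have "\<dots> = (\<Prod>i\<in>UNIV. \<Sum>s\<in>A i. g i s)"
    by (rule prod_sum_PiE[symmetric]) (auto simp: fA)
  also have "\<dots> \<le> (\<Prod>i\<in>(UNIV::'n set). 1)"
    by (rule prod_mono) (auto simp: A_def le intro!: sum_nonneg nn)
  finally show ?thesis by simp
qed

lemma young1: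
  fixes u q :: real assumes "u \<ge> 0" "q \<ge> 1"
  shows "u \<le> u powr q / q + (1 - 1/q)"
proof (cases "u = 0")
  case True then show ?thesis using assms by (simp add: field_simps)
next
  case False
  then have "(u powr q) powr (1/q) * 1 powr (1 - 1/q) \<le> (1/q) * u powr q + (1 - 1/q) * 1"
    using assms by (intro Youngs_inequality_0) (auto simp: field_simps)
  then show ?thesis using assms False by (simp add: powr_powr)
qed

definition H :: "real \<Rightarrow> real^'n \<Rightarrow> real^'n \<Rightarrow> real" where
  "H \<delta> w v = (\<Prod>i\<in>UNIV. hat ((w$i - v$i) / \<delta>))"

lemma H_nonneg: "H \<delta> w v \<ge> 0" unfolding H_def by (intro prod_nonneg) (auto simp: hat_nonneg)

lemma prod_bool_sum:
  fixes p :: "'n::finite \<Rightarrow> bool \<Rightarrow> real"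
  shows "(\<Sum>\<sigma>\<in>(UNIV::('n \<Rightarrow> bool) set). \<Prod>i\<in>UNIV. p i (\<sigma> i)) = (\<Prod>i\<in>UNIV. p i True + p i False)"
proof -
  have "(\<Prod>i\<in>UNIV. p i True + p i False) = (\<Prod>i\<in>UNIV. \<Sum>s\<in>(UNIV::bool set). p i s)"
    by (simp add: UNIV_bool add.commute)
  also have "\<dots> = (\<Sum>g\<in>PiE UNIV (\<lambda>_. UNIV). \<Prod>i\<in>UNIV. p i (g i))"
    by (rule prod_sum_PiE) auto
  finally show ?thesis by simp
qed

lemma cube_interp:
  fixes f :: "real^'n \<Rightarrow> real" and w :: "real^'n"
  assumes cv: "convex_on \<Omega> f" and dpos: "\<delta> > 0" and fin: "finite (\<Omega> \<inter> grid \<delta>)"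
    and bx: "\<And>v. (\<forall>i. \<bar>v$i - w$i\<bar> \<le> \<delta>) \<Longrightarrow> v \<in> \<Omega>"
  shows "f w \<le> (\<Sum>v\<in>\<Omega> \<inter> grid \<delta>. H \<delta> w v * \<bar>f v\<bar>)"
proof -
  define b :: "real^'n" where "b = (\<chi> i. real_of_int \<lfloor>w$i / \<delta>\<rfloor> * \<delta>)"
  define u where "u i = (w$i - b$i) / \<delta>" for i
  have u01: "0 \<le> u i \<and> u i < 1" for i
  proof -
    have "real_of_int \<lfloor>w$i / \<delta>\<rfloor> \<le> w$i / \<delta>" "w$i / \<delta> < real_of_int \<lfloor>w$i / \<delta>\<rfloor> + 1"
      by linarith+
    then have "real_of_int \<lfloor>w$i / \<delta>\<rfloor> * \<delta> \<le> w$i" "w$i < (real_of_int \<lfloor>w$i / \<delta>\<rfloor> + 1) * \<delta>"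
      using pos_le_divide_eq[OF dpos] pos_divide_less_eq[OF dpos] by blast+
    then show ?thesis using dpos unfolding u_def b_def by (auto simp: field_simps)
  qed
  define V :: "('n \<Rightarrow> bool) \<Rightarrow> real^'n" where "V \<sigma> = (\<chi> i. b$i + (if \<sigma> i then \<delta> else 0))" for \<sigma>
  define \<beta> where "\<beta> \<sigma> = (\<Prod>i\<in>UNIV. if \<sigma> i then u i else 1 - u i)" for \<sigma> :: "'n \<Rightarrow> bool"
  have wb: "w$i = b$i + \<delta> * u i" for i using dpos unfolding u_def by simp
  have Vin: "V \<sigma> \<in> \<Omega>" for \<sigma>
  proof (rule bx, intro allI)
    fix i
    have "0 \<le> u i" "u i < 1" using u01 by auto
    then have "0 \<le> \<delta>*u i" "\<delta> * u i \<le> \<delta>" using dpos by (auto simp: mult_le_cancel_left1)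
    then show "\<bar>V \<sigma> $ i - w $ i\<bar> \<le> \<delta>" by (auto simp: V_def wb)
  qed
  have Vgrid: "V \<sigma> \<in> grid \<delta>" for \<sigma>
  proof -
    have "\<exists>k::int. V \<sigma> $ i = real_of_int k * \<delta>" for i
      by (rule exI[of _ "\<lfloor>w$i / \<delta>\<rfloor> + (if \<sigma> i then 1 else 0)"]) (auto simp: V_def b_def algebra_simps)
    then show ?thesis unfolding grid_def by auto
  qed
  have bnn: "\<beta> \<sigma> \<ge> 0" for \<sigma> unfolding \<beta>_def using u01 by (intro prod_nonneg) (auto simp: less_imp_le)
  have bsum: "(\<Sum>\<sigma>\<in>UNIV. \<beta> \<sigma>) = 1"
    unfolding \<beta>_def by (subst prod_bool_sum) simp
  have bcomp: "(\<Sum>\<sigma>\<in>UNIV. \<beta> \<sigma> * (if \<sigma> j then 1 else 0)) = u j" for j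
  proof -
    have "(\<Sum>\<sigma>\<in>UNIV. \<beta> \<sigma> * (if \<sigma> j then 1 else 0)) =
        (\<Sum>\<sigma>\<in>UNIV. \<Prod>i\<in>UNIV. (if i = j then (if \<sigma> i then u i else 0) else (if \<sigma> i then u i else 1 - u i)))"
    proof (rule sum.cong[OF refl])
      fix \<sigma> :: "'n \<Rightarrow> bool"
      have "(\<Prod>i\<in>UNIV. (if i = j then (if \<sigma> i then u i else 0) else (if \<sigma> i then u i else 1 - u i)))
          = (if \<sigma> j then u j else 0) * (\<Prod>i\<in>UNIV-{j}. (if \<sigma> i then u i else 1 - u i))"
        by (subst prod.remove[of UNIV j]) (auto intro!: prod.cong)
      moreover have "\<beta> \<sigma> = (if \<sigma> j then u j else 1 - u j) * (\<Prod>i\<in>UNIV-{j}. (if \<sigma> i then u i else 1 - u i))"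
        unfolding \<beta>_def by (subst prod.remove[of UNIV j]) auto
      ultimately show "\<beta> \<sigma> * (if \<sigma> j then 1 else 0) = (\<Prod>i\<in>UNIV. (if i = j then (if \<sigma> i then u i else 0) else (if \<sigma> i then u i else 1 - u i)))"
        by auto
    qed
    also have "\<dots> = (\<Prod>i\<in>UNIV. (if i = j then u i else 1))"
      by (subst prod_bool_sum) (rule prod.cong, auto)
    also have "\<dots> = u j" by simp
    finally show ?thesis .
  qed
  have bary: "(\<Sum>\<sigma>\<in>UNIV. \<beta> \<sigma> *\<^sub>R V \<sigma>) = w"
  proof -
    have "(\<Sum>\<sigma>\<in>UNIV. \<beta> \<sigma> *\<^sub>R V \<sigma>) $ j = w $ j" for j
    proof -
      have "(\<Sum>\<sigma>\<in>UNIV. \<beta> \<sigma> *\<^sub>R V \<sigma>) $ j = (\<Sum>\<sigma>\<in>UNIV. \<beta> \<sigma> * (b$j + \<delta> * (if \<sigma> j then 1 else 0)))"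
        by (auto simp: V_def intro!: sum.cong)
      also have "\<dots> = b$j * (\<Sum>\<sigma>\<in>UNIV. \<beta> \<sigma>) + \<delta> * (\<Sum>\<sigma>\<in>UNIV. \<beta> \<sigma> * (if \<sigma> j then 1 else 0))"
        by (simp add: algebra_simps sum.distrib sum_distrib_left sum_distrib_right)
      also have "\<dots> = w$j" using bsum bcomp wb by simp
      finally show ?thesis .
    qed
    then show ?thesis by (simp add: vec_eq_iff)
  qed
  have bH: "\<beta> \<sigma> = H \<delta> w (V \<sigma>)" for \<sigma>
    unfolding \<beta>_def H_def
  proof (rule prod.cong[OF refl])
    fix i
    show "(if \<sigma> i then u i else 1 - u i) = hat ((w $ i - V \<sigma> $ i) / \<delta>)"
      using u01[of i] dpos by (auto simp: V_def wb hat_def field_simps)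
  qed
  have injV: "inj V"
  proof (rule injI)
    fix \<sigma> \<tau> assume "V \<sigma> = V \<tau>"
    then have "\<forall>i. (if \<sigma> i then \<delta> else 0) = (if \<tau> i then \<delta> else 0)" by (auto simp: V_def vec_eq_iff)
    then show "\<sigma> = \<tau>" using dpos by (intro ext) (smt (verit))
  qed
  have "f w = f (\<Sum>\<sigma>\<in>UNIV. \<beta> \<sigma> *\<^sub>R V \<sigma>)" using bary by simp
  also have "\<dots> \<le> (\<Sum>\<sigma>\<in>UNIV. \<beta> \<sigma> * f (V \<sigma>))"
    by (rule convex_on_sum[OF _ _ cv]) (auto simp: bsum bnn Vin)
  also have "\<dots> \<le> (\<Sum>\<sigma>\<in>UNIV. H \<delta> w (V \<sigma>) * \<bar>f (V \<sigma>)\<bar>)"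
    by (rule sum_mono) (auto simp: bH[symmetric] intro!: mult_left_mono bnn)
  also have "\<dots> = (\<Sum>v\<in>range V. H \<delta> w v * \<bar>f v\<bar>)"
    by (subst sum.reindex[OF injV]) simp
  also have "\<dots> \<le> (\<Sum>v\<in>\<Omega> \<inter> grid \<delta>. H \<delta> w v * \<bar>f v\<bar>)"
    by (rule sum_mono2[OF fin]) (auto simp: Vin Vgrid H_nonneg)
  finally show ?thesis .
qed

lemma weight_sum_le1:
  fixes Y :: "(real^'n) set" and x v :: "real^'n"
  assumes fin: "finite Y" and Yg: "Y \<subseteq> grid \<delta>" and dpos: "\<delta> > 0" and l: "0 < lam" "lam \<le> 1"
  shows "(\<Sum>y\<in>Y. H \<delta> (x + (1/lam) *\<^sub>R (y - x)) v) \<le> 1"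
proof -
  define g where "g i s = hat (((x$i + (s - x$i)/lam) - v$i)/\<delta>)" for i s
  have eq: "H \<delta> (x + (1/lam) *\<^sub>R (y - x)) v = (\<Prod>i\<in>UNIV. g i (y$i))" for y
    unfolding H_def g_def by (simp add: divide_inverse mult.commute)
  have "(\<Sum>y\<in>Y. \<Prod>i\<in>UNIV. g i (y$i)) \<le> 1"
  proof (rule sum_prod_le1[OF fin])
    show "g i s \<ge> 0" for i s unfolding g_def by (rule hat_nonneg)
    fix i
    define A where "A = (\<lambda>y. y$i)`Y"
    define \<phi> where "\<phi> s = ((x$i + (s - x$i)/lam) - v$i)/\<delta>" for s
    have injphi: "inj \<phi>"
      unfolding \<phi>_def using dpos l by (auto intro!: injI simp: field_simps)
    have Agrid: "\<exists>k::int. s = real_of_int k * \<delta>" if "s \<in> A" for s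
      using that Yg unfolding A_def grid_def by auto
    have sep: "\<bar>a - b\<bar> \<ge> 1" if asm: "a \<in> \<phi>`A" "b \<in> \<phi>`A" "a \<noteq> b" for a b
    proof -
      obtain s s' where ss: "s \<in> A" "s' \<in> A" "a = \<phi> s" "b = \<phi> s'" using asm(1,2) by auto
      obtain k k' :: int where kk: "s = k * \<delta>" "s' = k' * \<delta>" using Agrid ss by blast
      have "k \<noteq> k'" using asm ss kk by auto
      then have "\<bar>k - k'\<bar> \<ge> 1" by linarith
      then have "\<bar>real_of_int k - real_of_int k'\<bar> \<ge> 1" by linarith
      have "a - b = (s - s') / (lam * \<delta>)"
        using ss(3,4) dpos l unfolding \<phi>_def by (simp add: field_simps)
      also have "\<dots> = (real_of_int k - real_of_int k') / lam"
        using kk dpos l by (simp add: field_simps)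
      finally have "a - b = (real_of_int k - real_of_int k') / lam" .
      then have "\<bar>a - b\<bar> = \<bar>real_of_int k - real_of_int k'\<bar> / lam" using l by (simp add: abs_divide)
      also have "\<dots> \<ge> \<bar>real_of_int k - real_of_int k'\<bar>" using l
        by (simp add: le_divide_eq mult_left_le)
      finally show ?thesis using \<open>\<bar>real_of_int k - real_of_int k'\<bar> \<ge> 1\<close> by linarith
    qed
    have "(\<Sum>s\<in>A. g i s) = (\<Sum>a\<in>\<phi>`A. hat a)"
      by (subst sum.reindex) (auto simp: g_def \<phi>_def intro: inj_on_subset[OF injphi])
    also have "\<dots> \<le> 1" by (rule hat_sum_sep) (auto simp: A_def fin sep)
    finally show "(\<Sum>s\<in>(\<lambda>y. y$i)`Y. g i s) \<le> 1" unfolding A_def .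
  qed
  then show ?thesis by (simp add: eq)
qed

lemma main_ineq:
  fixes f :: "real^'n \<Rightarrow> real" and x :: "real^'n"
  assumes cv: "convex_on \<Omega> f" and xO: "x \<in> \<Omega>" and dpos: "\<delta> > 0"
    and l: "0 < lam" "lam < 1" and fin: "finite (\<Omega> \<inter> grid \<delta>)"
    and YG: "Y \<subseteq> \<Omega> \<inter> grid \<delta>"
    and Ybox: "\<And>y v. y \<in> Y \<Longrightarrow> (\<forall>i. \<bar>v$i - (x + (1/lam) *\<^sub>R (y - x))$i\<bar> \<le> \<delta>) \<Longrightarrow> v \<in> \<Omega>"
  shows "(1 - lam) * (- f x) * real (card Y) \<le> (1 + lam) * (\<Sum>v\<in>\<Omega> \<inter> grid \<delta>. \<bar>f v\<bar>)"
proof -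
  define G where "G = \<Omega> \<inter> grid \<delta>"
  define w where "w y = x + (1/lam) *\<^sub>R (y - x)" for y
  define S where "S = (\<Sum>v\<in>G. \<bar>f v\<bar>)"
  have finY: "finite Y" using YG fin finite_subset by blast
  have step: "f y \<le> (1 - lam) * f x + lam * (\<Sum>v\<in>G. H \<delta> (w y) v * \<bar>f v\<bar>)" if yY: "y \<in> Y" for y
  proof -
    have wO: "w y \<in> \<Omega>" using Ybox[OF yY, of "w y"] dpos unfolding w_def by auto
    have yeq: "y = (1 - lam) *\<^sub>R x + lam *\<^sub>R w y"
      using l unfolding w_def by (simp add: algebra_simps)
    have "f y \<le> (1 - lam) * f x + lam * f (w y)"
      using convex_onD[OF cv, of lam x "w y"] l xO wO yeq by auto
    moreover have "f (w y) \<le> (\<Sum>v\<in>G. H \<delta> (w y) v * \<bar>f v\<bar>)"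
      unfolding G_def by (rule cube_interp[OF cv dpos fin]) (use Ybox[OF yY] in \<open>auto simp: w_def\<close>)
    ultimately show ?thesis using l by (smt (verit) mult_left_mono)
  qed
  have "(\<Sum>y\<in>Y. f y) \<le> (\<Sum>y\<in>Y. (1 - lam) * f x + lam * (\<Sum>v\<in>G. H \<delta> (w y) v * \<bar>f v\<bar>))"
    by (rule sum_mono) (rule step)
  also have "\<dots> = real (card Y) * ((1 - lam) * f x) + lam * (\<Sum>v\<in>G. \<bar>f v\<bar> * (\<Sum>y\<in>Y. H \<delta> (w y) v))"
    by (simp add: sum.distrib sum_distrib_left sum_distrib_right sum.swap[of _ Y G] mult.commute mult.left_commute)
  also have "(\<Sum>v\<in>G. \<bar>f v\<bar> * (\<Sum>y\<in>Y. H \<delta> (w y) v)) \<le> (\<Sum>v\<in>G. \<bar>f v\<bar> * 1)"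
    by (rule sum_mono, rule mult_left_mono)
       (use weight_sum_le1[OF finY _ dpos] YG l in \<open>auto simp: w_def\<close>)
  finally have up: "(\<Sum>y\<in>Y. f y) \<le> real (card Y) * ((1 - lam) * f x) + lam * S"
    unfolding S_def using l by (smt (verit) mult_left_mono sum.cong)
  have "- S \<le> - (\<Sum>y\<in>Y. \<bar>f y\<bar>)"
    unfolding S_def G_def using YG fin by (simp add: sum_mono2)
  also have "\<dots> \<le> (\<Sum>y\<in>Y. f y)" by (simp add: sum_negf[symmetric] sum_mono)
  finally have "- S \<le> real (card Y) * ((1 - lam) * f x) + lam * S" using up by linarith
  then show ?thesis unfolding S_def G_def by (simp add: algebra_simps)
qed

lemma numeric:
  fixes a lam :: real and n :: nat
  assumes n: "n \<ge> 1" and a: "0 \<le> a" "a \<le> 1 / (10 * real n)" and lam: "lam = 1 - 1 / (2 * real n)"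
  shows "(1 + a) ^ n \<le> 5 * (lam * (1 - 3 * a)) ^ n"
proof -
  have na: "real n * a \<le> 1/10" using a n by (simp add: field_simps)
  have "1/(10 * real n) \<le> 1/10" using n by (simp add: field_simps)
  then have a1: "a \<le> 1/10" using a by linarith
  have l1: "1/2 \<le> lam ^ n"
  proof -
    have "1 + real n * (- 1 / (2 * real n)) \<le> (1 + (- 1 / (2 * real n))) ^ n"
      by (rule Bernoulli_inequality) (use n in \<open>simp add: field_simps\<close>)
    then show ?thesis using n by (simp add: lam field_simps)
  qed
  have b1: "1 - real n * (4 * a) \<le> (1 - 4 * a) ^ n"
    using Bernoulli_inequality[of "- (4*a)" n] a1 by simp
  have b2: "(1 - 4 * a) ^ n \<le> ((1 - 3*a) * (1 - a)) ^ n"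
    by (rule power_mono) (use a a1 in \<open>auto simp: algebra_simps\<close>)
  have b3: "((1 + a) * (1 - a)) ^ n \<le> 1"
    by (rule power_le_one) (use a a1 mult_mono[of a 1 a 1] in \<open>auto simp: algebra_simps\<close>)
  have pos: "(1 - a) ^ n > 0" using a1 by simp
  have "(1 + a) ^ n * (1 - a) ^ n \<le> 1" using b3 by (simp add: power_mult_distrib)
  also have "1 \<le> (5/3) * ((1 - 3*a) ^ n * (1 - a) ^ n)"
    using b1 b2 na by (simp add: power_mult_distrib)
  finally have "(1 + a) ^ n \<le> (5/3) * (1 - 3*a) ^ n" using pos by (simp add: mult_le_cancel_right)
  also have "\<dots> \<le> 5 * (lam ^ n * (1 - 3*a) ^ n)"
    using mult_right_mono[OF l1, of "(1 - 3*a) ^ n"] a1 by simp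
  finally show ?thesis by (simp add: power_mult_distrib)
qed

lemma norm_box:
  fixes e :: "real^'n"
  assumes "\<forall>i. \<bar>e$i\<bar> \<le> d"
  shows "norm e \<le> sqrt (real CARD('n)) * d"
proof -
  have d0: "d \<ge> 0" using assms abs_ge_zero order_trans by blast
  have "(\<Sum>i\<in>UNIV. (norm (e$i))\<^sup>2) \<le> (\<Sum>i\<in>(UNIV::'n set). d\<^sup>2)"
    using assms by (intro sum_mono) (metis power2_abs power_mono abs_ge_zero real_norm_def)
  then have "norm e \<le> sqrt (real CARD('n) * d\<^sup>2)"
    unfolding norm_vec_def L2_set_def by simp
  then show ?thesis using d0 by (simp add: real_sqrt_mult)
qed

lemma shrink_in:
  fixes z c e :: "'a::real_normed_vector"
  assumes cvx: "convex \<Omega>" and cb: "cball c r \<subseteq> \<Omega>" and z: "z \<in> \<Omega>"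
    and s: "0 < s" "s \<le> 1" and e: "norm e \<le> s * r"
  shows "(1 - s) *\<^sub>R z + s *\<^sub>R c + e \<in> \<Omega>"
proof -
  define b where "b = c + (1/s) *\<^sub>R e"
  have "dist c b = norm e / s" using s unfolding b_def by (simp add: dist_norm)
  also have "\<dots> \<le> r" using s e by (simp add: divide_le_eq mult.commute)
  finally have "b \<in> \<Omega>" using cb by auto
  then have "(1 - s) *\<^sub>R z + s *\<^sub>R b \<in> \<Omega>"
    using convexD[OF cvx z, of b "1 - s" s] s by auto
  moreover have "s *\<^sub>R b = s *\<^sub>R c + e" using s unfolding b_def by (simp add: algebra_simps)
  ultimately show ?thesis by (simp add: add.assoc)
qed

lemma finite_grid:
  fixes \<Omega> :: "(real^'n) set"
  assumes "bounded \<Omega>" "\<delta> > 0"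
  shows "finite (\<Omega> \<inter> grid \<delta>)"
proof -
  obtain B where B: "\<And>x. x \<in> \<Omega> \<Longrightarrow> norm x \<le> B" using assms(1) bounded_iff by blast
  define K where "K = \<lceil>B / \<delta>\<rceil>"
  define E where "E = (\<lambda>k::'n \<Rightarrow> int. (\<chi> i. real_of_int (k i) * \<delta>))"
  have "\<Omega> \<inter> grid \<delta> \<subseteq> E ` (PiE UNIV (\<lambda>_. {-K..K}))"
  proof
    fix x assume x: "x \<in> \<Omega> \<inter> grid \<delta>"
    define k where "k i = (SOME k::int. x$i = real_of_int k * \<delta>)" for i
    have kx: "x$i = real_of_int (k i) * \<delta>" for i
      using x unfolding grid_def k_def by (auto intro: someI_ex)
    have "\<bar>k i\<bar> \<le> K" for i
    proof -
      have "\<bar>x$i\<bar> \<le> B" using B[of x] x component_le_norm_cart[of x i] by auto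
      then have "\<bar>real_of_int (k i)\<bar> * \<delta> \<le> B" using kx[of i] assms(2) by (simp add: abs_mult)
      then have "\<bar>real_of_int (k i)\<bar> \<le> B / \<delta>" using assms(2) by (simp add: le_divide_eq)
      then show ?thesis unfolding K_def by linarith
    qed
    then have "k \<in> PiE UNIV (\<lambda>_. {-K..K})" by (auto simp: abs_le_iff) (smt (verit))
    moreover have "x = E k" unfolding E_def by (simp add: vec_eq_iff kx)
    ultimately show "x \<in> E ` (PiE UNIV (\<lambda>_. {-K..K}))" by blast
  qed
  moreover have "finite (E ` (PiE UNIV (\<lambda>_. {-K..K})))" by (intro finite_imageI finite_PiE) auto
  ultimately show ?thesis using finite_subset by blast
qed

lemma One_nth_cart: "(One::real^'n) $ i = 1"
proof -
  have b: "axis i (1::real) \<in> (Basis :: (real^'n) set)" by (auto simp: Basis_vec_def)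
  have "(\<Sum>Basis) \<bullet> axis i (1::real) = (1::real)"
    using b by (simp add: inner_sum_left inner_Basis sum.delta)
  then show ?thesis by (simp add: cart_eq_inner_axis)
qed

lemma One_nth_cart': "(\<Sum>x\<in>(Basis::(real^'n) set). x $ i) = 1"
  using One_nth_cart[where 'n='n, of i] by simp

lemma grid_sep:
  assumes "g \<in> grid \<delta>" "g' \<in> grid \<delta>" "g$i \<noteq> g'$i" "\<delta> > 0"
  shows "\<bar>g$i - g'$i\<bar> \<ge> \<delta>"
proof -
  obtain k k' :: int where kk: "g$i = k * \<delta>" "g'$i = k' * \<delta>" using assms(1,2) unfolding grid_def by blast
  then have "k \<noteq> k'" using assms(3) by auto
  then have "\<bar>real_of_int k - real_of_int k'\<bar> \<ge> 1" by linarith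
  then have "\<bar>real_of_int k - real_of_int k'\<bar> * \<delta> \<ge> 1 * \<delta>" using assms(4) by (intro mult_right_mono) auto
  then show ?thesis using kk assms(4) by (simp add: abs_mult left_diff_distrib[symmetric])
qed

lemma count_geom:
  fixes \<Omega> :: "(real^'n) set" and x c :: "real^'n"
  assumes cpt: "compact \<Omega>" and cvx: "convex \<Omega>" and dpos: "\<delta> > 0" and xO: "x \<in> \<Omega>"
    and cb: "cball c r \<subseteq> \<Omega>" and rpos: "r > 0"
    and a_def: "a = sqrt (real CARD('n)) * \<delta> / r" and ale: "a \<le> 1 / (10 * real CARD('n))"
    and lam: "lam = 1 - 1 / (2 * real CARD('n))"
  defines "Y \<equiv> {y \<in> \<Omega> \<inter> grid \<delta>. \<forall>v. (\<forall>i. \<bar>v$i - (x + (1/lam) *\<^sub>R (y - x))$i\<bar> \<le> \<delta>) \<longrightarrow> v \<in> \<Omega>}"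
  shows "real (card (\<Omega> \<inter> grid \<delta>)) \<le> 5 * real (card Y) \<and> card Y > 0"
proof -
  define n where "n = CARD('n)"
  have n1: "n \<ge> 1" unfolding n_def by (simp add: Suc_leI)
  define G where "G = \<Omega> \<inter> grid \<delta>"
  have finG: "finite G" unfolding G_def using finite_grid[OF compact_imp_bounded[OF cpt] dpos] .
  have YG: "Y \<subseteq> G" unfolding Y_def G_def by auto
  have finY: "finite Y" using finite_subset[OF YG finG] .
  have apos: "a > 0" using a_def dpos rpos n1 by (simp add: n_def)
  have ar: "a * r = sqrt (real n) * \<delta>" using a_def rpos by (simp add: n_def)
  have a10: "a \<le> 1/10"
  proof -
    have "1/(10 * real n) \<le> 1/10" using n1 by (simp add: field_simps)
    then show ?thesis using ale unfolding n_def by linarith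
  qed
  have lam12: "lam \<ge> 1/2" "lam \<le> 1" using n1 by (simp_all add: lam n_def field_simps)
  have boxnorm: "norm e \<le> a * r" if "\<forall>i. \<bar>e$i\<bar> \<le> \<delta>" for e :: "real^'n"
    using norm_box[OF that] ar by (simp add: n_def)
  define V where "V = measure lebesgue \<Omega>"
  have Vpos: "V > 0"
  proof -
    have "0 < measure lebesgue (cball c r)" using content_cball_pos[OF rpos] by simp
    also have "\<dots> \<le> V" unfolding V_def
      by (rule measure_mono_fmeasurable[OF cb]) (auto intro: lmeasurable_compact cpt)
    finally show ?thesis .
  qed
  define T3 where "T3 z = (1 + a) *\<^sub>R z + (- a *\<^sub>R c)" for z :: "real^'n"
  have U: "(\<Union>g\<in>G. box g (g + \<delta> *\<^sub>R One)) \<subseteq> T3 ` \<Omega>"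
  proof safe
    fix g p assume g: "g \<in> G" and p: "p \<in> box g (g + \<delta> *\<^sub>R One)"
    define e where "e = p - g"
    have "\<forall>i. \<bar>e$i\<bar> \<le> \<delta>" using p unfolding e_def by (auto simp: mem_box_cart One_nth_cart One_nth_cart') (smt (verit))
    then have ne: "norm e \<le> a * r" by (rule boxnorm)
    define s where "s = a / (1 + a)"
    have s01: "0 < s" "s \<le> 1" using apos unfolding s_def by auto
    have "norm ((1/(1+a)) *\<^sub>R e) \<le> s * r"
      using ne apos unfolding s_def by (simp add: divide_right_mono)
    then have zO: "(1 - s) *\<^sub>R g + s *\<^sub>R c + (1/(1+a)) *\<^sub>R e \<in> \<Omega>"
      using shrink_in[OF cvx cb _ s01] g unfolding G_def by auto
    have c1: "(1 + a) * (1 - s) = 1" "(1 + a) * s = a" using apos unfolding s_def by (auto simp: field_simps)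
    have "T3 ((1 - s) *\<^sub>R g + s *\<^sub>R c + (1/(1+a)) *\<^sub>R e) = p"
    proof -
      have "(1 + a) *\<^sub>R ((1 - s) *\<^sub>R g + s *\<^sub>R c + (1/(1+a)) *\<^sub>R e)
          = ((1 + a) * (1 - s)) *\<^sub>R g + ((1 + a) * s) *\<^sub>R c + ((1 + a) * (1/(1+a))) *\<^sub>R e"
        by (simp only: scaleR_add_right scaleR_scaleR)
      also have "\<dots> = g + a *\<^sub>R c + e" using apos by (simp add: c1)
      finally show ?thesis unfolding T3_def e_def by simp
    qed
    then show "p \<in> T3 ` \<Omega>" using zO by (metis image_eqI)
  qed
  have mboxes: "measure lebesgue (\<Union>g\<in>G. box g (g + \<delta> *\<^sub>R One)) = real (card G) * \<delta> ^ n"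
  proof -
    have "measure lebesgue (\<Union>g\<in>G. box g (g + \<delta> *\<^sub>R One)) = (\<Sum>g\<in>G. measure lebesgue (box g (g + \<delta> *\<^sub>R One)))"
    proof (rule measure_finite_Union[OF finG])
      show "(\<lambda>g. box g (g + \<delta> *\<^sub>R One)) ` G \<subseteq> sets lebesgue" by auto
      show "emeasure lebesgue (box g (g + \<delta> *\<^sub>R One)) \<noteq> \<infinity>" for g
        using lmeasurable_box[of g "g + \<delta> *\<^sub>R One"] by (simp add: fmeasurable_def)
      show "disjoint_family_on (\<lambda>g. box g (g + \<delta> *\<^sub>R One)) G"
      unfolding disjoint_family_on_def
      proof (intro ballI impI)
        fix g g' assume gg: "g \<in> G" "g' \<in> G" "g \<noteq> g'"
        then obtain i where i: "g$i \<noteq> g'$i" by (auto simp: vec_eq_iff)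
        have sep: "\<bar>g$i - g'$i\<bar> \<ge> \<delta>" using grid_sep[OF _ _ i dpos] gg unfolding G_def by auto
        show "box g (g + \<delta> *\<^sub>R One) \<inter> box g' (g' + \<delta> *\<^sub>R One) = {}"
        proof (rule ccontr)
          assume "box g (g + \<delta> *\<^sub>R One) \<inter> box g' (g' + \<delta> *\<^sub>R One) \<noteq> {}"
          then obtain p where "p \<in> box g (g + \<delta> *\<^sub>R One)" "p \<in> box g' (g' + \<delta> *\<^sub>R One)" by blast
          then have "g$i < p$i" "p$i < g$i + \<delta>" "g'$i < p$i" "p$i < g'$i + \<delta>"
            by (auto simp: mem_box_cart One_nth_cart One_nth_cart')
          then show False using sep by linarith
        qed
      qed
    qed
    also have "\<dots> = real (card G) * \<delta> ^ n"
      using dpos by (simp add: measure_lborel_box_eq inner_diff_left inner_add_left n_def)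
    finally show ?thesis .
  qed
  have m3: "measure lebesgue (T3 ` \<Omega>) = (1 + a) ^ n * V"
    unfolding T3_def V_def using measure_lebesgue_affine[of "1 + a" "- a *\<^sub>R c" \<Omega>] apos
    by (simp add: n_def)
  have upper: "real (card G) * \<delta> ^ n \<le> (1 + a) ^ n * V"
  proof -
    have "compact (T3 ` \<Omega>)" unfolding T3_def
      by (intro compact_continuous_image cpt continuous_intros)
    then have "measure lebesgue (\<Union>g\<in>G. box g (g + \<delta> *\<^sub>R One)) \<le> measure lebesgue (T3 ` \<Omega>)"
      using U by (intro measure_mono_fmeasurable) (auto intro: lmeasurable_compact finG)
    then show ?thesis using mboxes m3 by simp
  qed
  define T where "T z = (lam * (1 - 3 * a)) *\<^sub>R z + ((1 - lam) *\<^sub>R x + (lam * (3 * a)) *\<^sub>R c)" for z :: "real^'n"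
  define fl where "fl p = (\<chi> i. real_of_int \<lfloor>p$i / \<delta>\<rfloor> * \<delta>)" for p :: "real^'n"
  have flp: "fl p $ i \<le> p $ i \<and> p $ i \<le> fl p $ i + \<delta>" for p i
  proof -
    have "real_of_int \<lfloor>p$i / \<delta>\<rfloor> \<le> p$i / \<delta>" "p$i / \<delta> < real_of_int \<lfloor>p$i / \<delta>\<rfloor> + 1"
      by linarith+
    then have "real_of_int \<lfloor>p$i / \<delta>\<rfloor> * \<delta> \<le> p$i" "p$i < (real_of_int \<lfloor>p$i / \<delta>\<rfloor> + 1) * \<delta>"
      using pos_le_divide_eq[OF dpos] pos_divide_less_eq[OF dpos] by blast+
    then show ?thesis unfolding fl_def by (simp add: algebra_simps)
  qed
  have L: "T ` \<Omega> \<subseteq> (\<Union>y\<in>Y. cbox y (y + \<delta> *\<^sub>R One))"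
  proof safe
    fix z assume zO: "z \<in> \<Omega>"
    define p where "p = T z"
    define y where "y = fl p"
    define z' where "z' = (1 - 3 * a) *\<^sub>R z + (3 * a) *\<^sub>R c"
    have pz: "p = (1 - lam) *\<^sub>R x + lam *\<^sub>R z'"
      unfolding p_def T_def z'_def by (simp add: algebra_simps)
    define e1 where "e1 = p - y"
    have e1b: "\<forall>i. \<bar>e1$i\<bar> \<le> \<delta>" using flp unfolding e1_def y_def by (smt (verit) vector_minus_component)
    define w where "w = x + (1/lam) *\<^sub>R (y - x)"
    have lpos: "lam > 0" using lam12 by linarith
    have wz: "w = z' - (1/lam) *\<^sub>R e1"
    proof -
      have "y - x = lam *\<^sub>R (z' - x) - e1" unfolding e1_def using pz by (simp add: algebra_simps)
      then have "w = x + (1/lam) *\<^sub>R (lam *\<^sub>R (z' - x) - e1)" unfolding w_def by simp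
      also have "\<dots> = x + (z' - x) - (1/lam) *\<^sub>R e1"
        using lpos by (simp only: scaleR_diff_right scaleR_scaleR) (simp add: algebra_simps)
      finally show ?thesis by simp
    qed
    have box_in: "v \<in> \<Omega>" if vb: "\<forall>i. \<bar>v$i - w$i\<bar> \<le> \<delta>" for v
    proof -
      define e where "e = (v - w) - (1/lam) *\<^sub>R e1"
      have n2: "norm (v - w) \<le> a * r" using vb by (intro boxnorm) auto
      have n1': "norm e1 \<le> a * r" using e1b by (rule boxnorm)
      have "norm e \<le> norm (v - w) + norm ((1/lam) *\<^sub>R e1)" unfolding e_def by (rule norm_triangle_ineq4)
      also have "norm ((1/lam) *\<^sub>R e1) = norm e1 / lam" using lpos by simp
      also have "norm e1 / lam \<le> 2 * (a * r)"
      proof -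
        have "a * r * 1 \<le> a * r * (2 * lam)" by (rule mult_left_mono) (use lam12 apos rpos in auto)
        then have "norm e1 \<le> 2 * (a * r) * lam" using n1' by (simp add: algebra_simps)
        then show ?thesis using lpos by (simp add: divide_le_eq)
      qed
      finally have "norm e \<le> (3 * a) * r" using n2 by linarith
      then have "(1 - 3 * a) *\<^sub>R z + (3 * a) *\<^sub>R c + e \<in> \<Omega>"
        using shrink_in[OF cvx cb zO, of "3 * a" e] apos a10 by auto
      moreover have "v = (1 - 3 * a) *\<^sub>R z + (3 * a) *\<^sub>R c + e"
        unfolding e_def using wz z'_def by (simp add: algebra_simps)
      ultimately show ?thesis by simp
    qed
    have wO: "w \<in> \<Omega>" using box_in[of w] dpos by auto
    have "y = (1 - lam) *\<^sub>R x + lam *\<^sub>R w" unfolding w_def using lpos by (simp add: algebra_simps)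
    then have yO: "y \<in> \<Omega>" using convexD[OF cvx xO wO, of "1 - lam" lam] lam12 by auto
    have yg: "y \<in> grid \<delta>" unfolding y_def fl_def grid_def by auto
    have "y \<in> Y" unfolding Y_def using yO yg box_in by (auto simp: w_def)
    moreover have "p \<in> cbox y (y + \<delta> *\<^sub>R One)" unfolding y_def using flp by (auto simp: mem_box_cart One_nth_cart One_nth_cart')
    ultimately show "T z \<in> (\<Union>y\<in>Y. cbox y (y + \<delta> *\<^sub>R One))" unfolding p_def by blast
  qed
  have lam3pos: "lam * (1 - 3 * a) > 0" using lam12 a10 by simp
  have mT: "measure lebesgue (T ` \<Omega>) = (lam * (1 - 3 * a)) ^ n * V"
    unfolding T_def V_def using measure_lebesgue_affine[of "lam * (1 - 3 * a)" _ \<Omega>] lam3pos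
    by (simp add: n_def)
  have lower: "(lam * (1 - 3 * a)) ^ n * V \<le> real (card Y) * \<delta> ^ n"
  proof -
    have "compact (T ` \<Omega>)" unfolding T_def
      by (intro compact_continuous_image cpt continuous_intros)
    have cU: "compact (\<Union>y\<in>Y. cbox y (y + \<delta> *\<^sub>R One))" using finY by (auto intro!: compact_UN)
    have "measure lebesgue (T ` \<Omega>) \<le> measure lebesgue (\<Union>y\<in>Y. cbox y (y + \<delta> *\<^sub>R One))"
      using L fmeasurableD[OF lmeasurable_compact[OF \<open>compact (T ` \<Omega>)\<close>]] lmeasurable_compact[OF cU]
      by (intro measure_mono_fmeasurable) auto
    also have "\<dots> \<le> (\<Sum>y\<in>Y. measure lebesgue (cbox y (y + \<delta> *\<^sub>R One)))"
      by (rule measure_UNION_le[OF finY]) auto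
    also have "\<dots> = real (card Y) * \<delta> ^ n"
      using dpos by (simp add: measure_lborel_cbox_eq inner_diff_left inner_add_left n_def)
    finally show ?thesis using mT by simp
  qed
  have num: "(1 + a) ^ n \<le> 5 * (lam * (1 - 3 * a)) ^ n"
    by (rule numeric[OF n1]) (use apos ale lam in \<open>auto simp: n_def\<close>)
  have dn: "\<delta> ^ n > 0" using dpos by simp
  have "real (card G) * \<delta> ^ n \<le> 5 * (real (card Y) * \<delta> ^ n)"
  proof -
    have "(1 + a) ^ n * V \<le> 5 * (lam * (1 - 3 * a)) ^ n * V"
      using mult_right_mono[OF num, of V] Vpos by simp
    then show ?thesis using upper lower by linarith
  qed
  then have c1: "real (card G) \<le> 5 * real (card Y)" using dn by (simp add: mult_le_cancel_right)
  have "0 < (lam * (1 - 3 * a)) ^ n * V" using lam3pos Vpos by simp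
  then have "0 < real (card Y) * \<delta> ^ n" using lower by linarith
  then have "card Y > 0" by (metis gr0I mult_zero_left of_nat_0 less_irrefl)
  then show ?thesis using c1 unfolding G_def by simp
qed

lemma sum_le_from_ell:
  fixes f :: "'a \<Rightarrow> real"
  assumes fin: "finite G" and q: "q \<ge> 1" and t: "t > 0"
    and ell: "((1 / real (card G)) * (\<Sum>s\<in>G. \<bar>f s\<bar> powr q)) powr (1 / q) \<le> t"
  shows "(\<Sum>s\<in>G. \<bar>f s\<bar>) \<le> real (card G) * t"
proof (cases "card G = 0")
  case True then show ?thesis using fin by simp
next
  case False
  define N where "N = real (card G)"
  have Npos: "N > 0" using False unfolding N_def by simp
  define P where "P = (\<Sum>s\<in>G. \<bar>f s\<bar> powr q)"
  have P0: "P \<ge> 0" unfolding P_def by (intro sum_nonneg) auto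
  define X where "X = (1 / N) * P"
  have X0: "X \<ge> 0" unfolding X_def using Npos P0 by simp
  have "X = (X powr (1/q)) powr q" using X0 q by (simp add: powr_powr)
  also have "\<dots> \<le> t powr q"
    by (rule powr_mono2) (use q ell X0 in \<open>auto simp: X_def P_def N_def\<close>)
  finally have "P \<le> N * t powr q" unfolding X_def using Npos by (simp add: field_simps)
  have tq: "t powr q > 0" using t by simp
  have each: "\<bar>f s\<bar> / t \<le> (\<bar>f s\<bar> powr q / t powr q) / q + (1 - 1/q)" for s
    using young1[of "\<bar>f s\<bar> / t" q] q t by (simp add: powr_divide)
  have "(\<Sum>s\<in>G. \<bar>f s\<bar> / t) \<le> (\<Sum>s\<in>G. (\<bar>f s\<bar> powr q / t powr q) / q + (1 - 1/q))"
    by (rule sum_mono) (rule each)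
  also have "\<dots> = P / (t powr q) / q + N * (1 - 1/q)"
    unfolding P_def N_def by (simp add: sum.distrib sum_divide_distrib)
  also have "\<dots> \<le> N / q + N * (1 - 1/q)"
  proof -
    have "P / (t powr q) \<le> N" using \<open>P \<le> N * t powr q\<close> tq by (simp add: divide_le_eq)
    then have "P / (t powr q) / q \<le> N / q" using q by (intro divide_right_mono) auto
    then show ?thesis by simp
  qed
  also have "\<dots> = N" using q by (simp add: field_simps)
  finally have "(\<Sum>s\<in>G. \<bar>f s\<bar>) / t \<le> N" by (simp add: sum_divide_distrib)
  then show ?thesis using t unfolding N_def by (simp add: divide_le_eq)
qed

theorem lemma9p4:
  fixes \<Omega> :: "(real^'n) set" and \<delta> q t :: real and f :: "real^'n \<Rightarrow> real"
  assumes "\<delta> > 0" and "1 \<le> q"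
    and "compact \<Omega>" and "convex \<Omega>" and "interior \<Omega> \<noteq> {}"
    and "\<forall>x\<in>\<Omega>. \<forall>i. 0 \<le> x $ i \<and> x $ i \<le> 1"
    and "\<exists>c r. r \<ge> 10 * real CARD('n) powr (3/2) * \<delta> \<and> ball c r \<subseteq> \<Omega>"
    and "t > 0" and "f \<in> B_S \<delta> q t \<Omega>"
  shows "\<forall>x\<in>\<Omega>. f x \<ge> - 20 * real CARD('n) * t"
proof
  fix x assume xO: "x \<in> \<Omega>"
  note dpos = assms(1) and q = assms(2) and cpt = assms(3) and cvx = assms(4) and tpos = assms(8)
  have cv: "convex_on \<Omega> f" and ell: "ell_S \<delta> f \<Omega> q \<le> t" using assms(9) unfolding B_S_def by auto
  define n where "n = real CARD('n)"
  have n1: "n \<ge> 1" unfolding n_def by (simp add: Suc_leI)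
  obtain c r where r: "r \<ge> 10 * n powr (3/2) * \<delta>" and bO: "ball c r \<subseteq> \<Omega>"
    using assms(7) unfolding n_def by blast
  have n32: "n powr (3/2) = n * sqrt n"
  proof -
    have "n powr (3/2) = n powr 1 * n powr (1/2)" by (subst powr_add[symmetric]) simp
    also have "\<dots> = n * n powr (1/2)" using n1 by simp
    also have "\<dots> = n * sqrt n" using n1 by (simp add: powr_half_sqrt)
    finally show ?thesis .
  qed
  have sn: "sqrt n \<ge> 1" using n1 by simp
  have rge: "r \<ge> 10 * n * sqrt n * \<delta>" using r n32 by simp
  have rpos: "r > 0"
  proof -
    have "10 * n * sqrt n * \<delta> > 0" using n1 sn dpos by simp
    then show ?thesis using rge by linarith
  qed
  have cb: "cball c r \<subseteq> \<Omega>"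
  proof -
    have "closure (ball c r) \<subseteq> closure \<Omega>" using bO by (rule closure_mono)
    then show ?thesis using rpos compact_imp_closed[OF cpt] by (simp add: closure_ball closure_closed)
  qed
  define a where "a = sqrt n * \<delta> / r"
  have ale: "a \<le> 1 / (10 * n)"
  proof -
    have p: "0 < 10 * n * sqrt n * \<delta>" using n1 sn dpos by simp
    have "a \<le> sqrt n * \<delta> / (10 * n * sqrt n * \<delta>)"
      unfolding a_def by (rule divide_left_mono[OF rge]) (use p dpos sn rpos in \<open>auto intro: mult_pos_pos\<close>)
    also have "\<dots> = 1 / (10 * n)" using n1 sn dpos by (simp add: field_simps)
    finally show ?thesis .
  qed
  define lam where "lam = 1 - 1 / (2 * n)"
  define Y where "Y = {y \<in> \<Omega> \<inter> grid \<delta>. \<forall>v. (\<forall>i. \<bar>v$i - (x + (1/lam) *\<^sub>R (y - x))$i\<bar> \<le> \<delta>) \<longrightarrow> v \<in> \<Omega>}"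
  have cg: "real (card (\<Omega> \<inter> grid \<delta>)) \<le> 5 * real (card Y) \<and> card Y > 0"
    unfolding Y_def
    by (rule count_geom[OF cpt cvx dpos xO cb rpos, of a lam])
       (use ale in \<open>simp_all add: a_def lam_def n_def\<close>)
  have fin: "finite (\<Omega> \<inter> grid \<delta>)" using finite_grid[OF compact_imp_bounded[OF cpt] dpos] .
  have l: "0 < lam" "lam < 1" using n1 unfolding lam_def by (auto simp: field_simps)
  have mi: "(1 - lam) * (- f x) * real (card Y) \<le> (1 + lam) * (\<Sum>v\<in>\<Omega> \<inter> grid \<delta>. \<bar>f v\<bar>)"
    by (rule main_ineq[OF cv xO dpos l fin]) (auto simp: Y_def)
  have S: "(\<Sum>v\<in>\<Omega> \<inter> grid \<delta>. \<bar>f v\<bar>) \<le> real (card (\<Omega> \<inter> grid \<delta>)) * t"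
    by (rule sum_le_from_ell[OF fin q tpos]) (use ell in \<open>simp add: ell_S_def\<close>)
  define K where "K = real (card Y)"
  have Kpos: "K > 0" using cg unfolding K_def by simp
  have "(1 - lam) * (- f x) * K \<le> (1 + lam) * (5 * K * t)"
  proof -
    have "(1 + lam) * (\<Sum>v\<in>\<Omega> \<inter> grid \<delta>. \<bar>f v\<bar>) \<le> (1 + lam) * (real (card (\<Omega> \<inter> grid \<delta>)) * t)"
      using S l by (intro mult_left_mono) auto
    also have "\<dots> \<le> (1 + lam) * (5 * K * t)"
      using cg l tpos unfolding K_def by (intro mult_left_mono mult_right_mono) auto
    finally show ?thesis using mi unfolding K_def by linarith
  qed
  then have "((1 - lam) * (- f x)) * K \<le> ((1 + lam) * 5 * t) * K" by (simp add: ac_simps)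
  then have "(1 - lam) * (- f x) \<le> (1 + lam) * 5 * t" using Kpos by (rule mult_right_le_imp_le)
  then have "(- f x) / (2 * n) \<le> (2 - 1 / (2 * n)) * 5 * t" unfolding lam_def by (simp add: algebra_simps)
  moreover have c2: "0 < 2 * n" using n1 by simp
  ultimately have "- f x \<le> (2 - 1 / (2 * n)) * 5 * t * (2 * n)" using pos_divide_le_eq[OF c2] by blast
  also have "\<dots> = (20 * n - 5) * t" using n1 by (simp add: field_simps)
  also have "\<dots> \<le> 20 * n * t" using tpos by simp
  finally show "f x \<ge> - 20 * real CARD('n) * t" unfolding n_def by simp
qed

end
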